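(* Let $M$ be a $po$-$\Gamma$-semigroup, $f$ a fuzzy subset of $M$ and $a\in M$. If $a\le x\mu a\gamma a\rho y$ for some $x,y\in M$ and $\mu,\gamma,\rho\in\Gamma$, then $f(a)\le \big((1\circ f^2)\circ 1\big)(a)$, where $f^2=f\circ f$.
   Context: Let $M$ and $\Gamma$ be nonempty sets with a map $M\times\Gamma\times M\to M$, $(a,\gamma,b)\mapsto a\gamma b$, satisfying $(a\gamma b)\mu c=a\gamma(b\mu c)$ for all $a,b,c\in M$, $\gamma,\mu\in\Gamma$. A $po$-$\Gamma$-semigroup is such an $M$ with a partial order $\le$ such that $a\le b$ implies $a\gamma c\le b\gamma c$ and $c\gamma a\le c\gamma b$ for all $c\in M$, $\gamma\in\Gamma$. A fuzzy subset of $M$ is a map $M\to[0,1]$. $1$ denotes the fuzzy subset with $1(x)=1$ for all $x$. For $c\in M$ let $A_c=\{(y,z)\in M\times M: c\le y\gamma z \text{ for some }\gamma\in\Gamma\}$. $(f\circ g)(c)=\bigvee_{(y,z)\in A_c}\min\{f(y),g(z)\}$ if $A_c\ne\emptyset$, and $0$ otherwise. *)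

theory Defs
  imports Main "HOL.Real"
begin

definition po_gamma_semigroup ::
  "('m \<Rightarrow> 'g \<Rightarrow> 'm \<Rightarrow> 'm) \<Rightarrow> ('m \<Rightarrow> 'm \<Rightarrow> bool) \<Rightarrow> bool" where
  "po_gamma_semigroup op le \<longleftrightarrow>
     (\<forall>a b c \<gamma> \<mu>. op (op a \<gamma> b) \<mu> c = op a \<gamma> (op b \<mu> c)) \<and>
     (\<forall>a. le a a) \<and>
     (\<forall>a b. le a b \<and> le b a \<longrightarrow> a = b) \<and>
     (\<forall>a b c. le a b \<and> le b c \<longrightarrow> le a c) \<and>
     (\<forall>a b c \<gamma>. le a b \<longrightarrow> le (op a \<gamma> c) (op b \<gamma> c) \<and> le (op c \<gamma> a) (op c \<gamma> b))"

definition fuzzy_subset :: "('m \<Rightarrow> real) \<Rightarrow> bool" where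
  "fuzzy_subset f \<longleftrightarrow> (\<forall>x. 0 \<le> f x \<and> f x \<le> 1)"

definition A_set :: "('m \<Rightarrow> 'g \<Rightarrow> 'm \<Rightarrow> 'm) \<Rightarrow> ('m \<Rightarrow> 'm \<Rightarrow> bool) \<Rightarrow> 'm \<Rightarrow> ('m \<times> 'm) set" where
  "A_set op le c = {(y, z). \<exists>\<gamma>. le c (op y \<gamma> z)}"

definition fcomp ::
  "('m \<Rightarrow> 'g \<Rightarrow> 'm \<Rightarrow> 'm) \<Rightarrow> ('m \<Rightarrow> 'm \<Rightarrow> bool) \<Rightarrow> ('m \<Rightarrow> real) \<Rightarrow> ('m \<Rightarrow> real) \<Rightarrow> 'm \<Rightarrow> real" where
  "fcomp op le f g c =
     (if A_set op le c = {} then 0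
      else Sup ((\<lambda>(y, z). min (f y) (g z)) ` A_set op le c))"

end

theory Submission
  imports Defs
begin

lemma fcomp_ge:
  assumes "\<And>u. f u \<le> 1" "\<And>u. g u \<le> 1" "le c (op y \<gamma> z)"
  shows "min (f y) (g z) \<le> fcomp op le f g c"
proof -
  have mem: "(y, z) \<in> A_set op le c" using assms(3) unfolding A_set_def by blast
  have bdd: "bdd_above ((\<lambda>(y, z). min (f y) (g z)) ` A_set op le c)"
    by (rule bdd_aboveI[of _ 1]) (auto simp: assms(1) min.coboundedI1)
  have "min (f y) (g z) \<le> Sup ((\<lambda>(y, z). min (f y) (g z)) ` A_set op le c)"
    by (rule cSup_upper[OF _ bdd]) (use mem in force)
  then show ?thesis using mem unfolding fcomp_def by auto
qed

lemma fcomp_le1: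
  assumes "\<And>u. f u \<le> 1" "\<And>u. g u \<le> 1"
  shows "fcomp op le f g c \<le> 1"
proof (cases "A_set op le c = {}")
  case False
  then show ?thesis unfolding fcomp_def
    by (auto intro!: cSup_least simp: assms(1) min.coboundedI1)
qed (simp add: fcomp_def)

theorem lemma22:
  fixes op :: "'m \<Rightarrow> 'g \<Rightarrow> 'm \<Rightarrow> 'm" and le :: "'m \<Rightarrow> 'm \<Rightarrow> bool"
    and f :: "'m \<Rightarrow> real" and a x y :: 'm and \<mu> \<gamma> \<rho> :: 'g
  assumes "po_gamma_semigroup op le"
    and "fuzzy_subset f"
    and "le a (op (op (op x \<mu> a) \<gamma> a) \<rho> y)"
  shows "f a \<le> fcomp op le (fcomp op le (\<lambda>_. 1) (fcomp op le f f)) (\<lambda>_. 1) a"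
proof -
  have f1: "\<And>u. f u \<le> 1" using assms(2) unfolding fuzzy_subset_def by auto
  have assoc: "\<And>a b c \<gamma> \<mu>. op (op a \<gamma> b) \<mu> c = op a \<gamma> (op b \<mu> c)"
    and refl: "\<And>a. le a a" using assms(1) unfolding po_gamma_semigroup_def by auto
  have ff1: "\<And>u. fcomp op le f f u \<le> 1" by (rule fcomp_le1) (auto simp: f1)
  have F1: "\<And>u. fcomp op le (\<lambda>_. 1) (fcomp op le f f) u \<le> 1"
    by (rule fcomp_le1) (auto simp: ff1)
  have s1: "f a \<le> fcomp op le f f (op a \<gamma> a)"
    using fcomp_ge[of f f le "op a \<gamma> a" op a \<gamma> a] f1 refl by auto
  have s2: "fcomp op le f f (op a \<gamma> a) \<le> fcomp op le (\<lambda>_. 1) (fcomp op le f f) (op x \<mu> (op a \<gamma> a))"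
    using fcomp_ge[of "\<lambda>_. 1" "fcomp op le f f" le "op x \<mu> (op a \<gamma> a)" op x \<mu> "op a \<gamma> a"] ff1 refl
    by (simp add: min_def split: if_splits) (meson ff1 order_trans)
  have le3: "le a (op (op x \<mu> (op a \<gamma> a)) \<rho> y)" using assms(3) by (simp add: assoc)
  have s3: "fcomp op le (\<lambda>_. 1) (fcomp op le f f) (op x \<mu> (op a \<gamma> a)) \<le> fcomp op le (fcomp op le (\<lambda>_. 1) (fcomp op le f f)) (\<lambda>_. 1) a"
    using fcomp_ge[of "fcomp op le (\<lambda>_. 1) (fcomp op le f f)" "\<lambda>_. 1" le a op "op x \<mu> (op a \<gamma> a)" \<rho> y] F1 le3
    by (auto simp: min_def split: if_splits)
  show ?thesis using s1 s2 s3 by linarith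
qed

end
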